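(* Let $s>0$, $k>0$, and let $\theta(t)$, $t\ge0$, be differentiable and satisfy $$\frac{d}{dt}\cos s\theta\ge k(1-\cos^2s\theta),$$ with $\cos s\theta_0\ge1/2$. Then $\cos s\theta_t\ge\tanh(kt)$ for all $t\ge0$, and hence, for $c<1$, if $T=\inf\{t\ge0:\cos s\theta_t\ge c\}$ then $T\le\frac1{2k}\log\frac{2}{1-c}$. *)

theory Defs
  imports "HOL-Analysis.Analysis"
begin

end

theory Submission
  imports Defs
begin

theorem lemmaH1:
  fixes s k :: real and \<theta> D :: "real \<Rightarrow> real"
  assumes "s > 0" and "k > 0"
    and "\<forall>t\<ge>0. \<theta> differentiable (at t within {0..})"
    and "\<forall>t\<ge>0. ((\<lambda>u. cos (s * \<theta> u)) has_real_derivative D t) (at t within {0..})"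
    and "\<forall>t\<ge>0. D t \<ge> k * (1 - (cos (s * \<theta> t))\<^sup>2)"
    and "cos (s * \<theta> 0) \<ge> 1/2"
  shows "(\<forall>t\<ge>0. cos (s * \<theta> t) \<ge> tanh (k * t)) \<and>
         (\<forall>c::real. -1 \<le> c \<and> c < 1 \<longrightarrow>
            Inf {t. t \<ge> 0 \<and> cos (s * \<theta> t) \<ge> c} \<le> ln (2 / (1 - c)) / (2 * k))"
proof -
  define y where "y = (\<lambda>u. cos (s * \<theta> u))"
  have dy: "(y has_real_derivative D t) (at t)" if "t > 0" for t
  proof -
    have "t \<in> interior {0::real..}" using that by simp
    then have "at t within {0..} = at t" by (rule at_within_interior)
    then show ?thesis using assms(4) that unfolding y_def by (metis less_imp_le)
  qed
  have cont: "continuous_on {0..t} y" for t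
  proof -
    have "continuous_on {0..} y"
      unfolding continuous_on_eq_continuous_within
      using assms(4) DERIV_continuous unfolding y_def by (metis atLeast_iff)
    then show ?thesis by (rule continuous_on_subset) auto
  qed
  have y1: "y t \<le> 1" for t unfolding y_def by simp
  have Dnn: "D t \<ge> 0" if "t \<ge> 0" for t
  proof -
    have "(y t)\<^sup>2 \<le> 1" unfolding y_def using sin_cos_squared_add[of "s * \<theta> t"] zero_le_power2[of "sin (s * \<theta> t)"] by linarith
    then show ?thesis using assms(2,5) that unfolding y_def
      by (smt (verit) mult_nonneg_nonneg)
  qed
  have ymono: "y t \<ge> 1/2" if "t \<ge> 0" for t
  proof -
    have "y 0 \<le> y t"
      by (rule DERIV_nonneg_imp_increasing_open[OF that]) (use dy Dnn cont in \<open>auto intro: less_imp_le\<close>)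
    then show ?thesis using assms(6) unfolding y_def by simp
  qed
  define q where "q = (\<lambda>u. (1 - y u) * exp (2*k*u) / (1 + y u))"
  have qd: "q t \<le> q 0" if "t \<ge> 0" for t
  proof (rule DERIV_nonpos_imp_decreasing_open[OF that])
    fix x :: real assume x: "0 < x" "x < t"
    have yx: "y x \<ge> 1/2" using ymono x by simp
    have "(q has_real_derivative
       ((- D x * exp (2*k*x) + (1 - y x) * (exp (2*k*x) * (2*k))) * (1 + y x)
         - (1 - y x) * exp (2*k*x) * D x) / ((1 + y x) * (1 + y x))) (at x)"
      unfolding q_def using yx
      by (auto intro!: derivative_eq_intros dy x)
    moreover have "((- D x * exp (2*k*x) + (1 - y x) * (exp (2*k*x) * (2*k))) * (1 + y x)
         - (1 - y x) * exp (2*k*x) * D x) / ((1 + y x) * (1 + y x)) \<le> 0"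
    proof (rule divide_nonpos_nonneg)
      have "((- D x * exp (2*k*x) + (1 - y x) * (exp (2*k*x) * (2*k))) * (1 + y x)
         - (1 - y x) * exp (2*k*x) * D x) = exp (2*k*x) * (2 * (k * (1 - (y x)\<^sup>2) - D x))"
        by (simp add: algebra_simps power2_eq_square)
      also have "\<dots> \<le> 0" using assms(5) x unfolding y_def
        by (intro mult_nonneg_nonpos) auto
      finally show "((- D x * exp (2*k*x) + (1 - y x) * (exp (2*k*x) * (2*k))) * (1 + y x)
         - (1 - y x) * exp (2*k*x) * D x) \<le> 0" .
    qed simp
    ultimately show "\<exists>z. (q has_real_derivative z) (at x) \<and> z \<le> 0" by blast
  next
    have "continuous_on {0..t} (\<lambda>u. (1 - y u) * exp (2*k*u) / (1 + y u))"
    proof (intro continuous_intros cont ballI)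
      fix x assume "x \<in> {0..t}"
      then have "y x \<ge> 1/2" using ymono by simp
      then show "1 + y x \<noteq> 0" by simp
    qed
    then show "continuous_on {0..t} q" unfolding q_def .
  qed
  have part1: "y t \<ge> tanh (k * t)" if "t \<ge> 0" for t
  proof -
    have y0: "y 0 \<ge> 1/2" using ymono by simp
    have "q 0 \<le> 1" unfolding q_def using y0 by (simp add: field_simps)
    then have "q t \<le> 1" using qd that by fastforce
    then have "(1 - y t) * exp (2*k*t) \<le> 1 + y t" unfolding q_def using ymono[OF that]
      by (simp add: field_simps)
    then have "(1 - y t) * exp (2*k*t) * exp (- 2*k*t) \<le> (1 + y t) * exp (- 2*k*t)"
      by (simp add: mult_right_mono)
    moreover have "exp (2*k*t) * exp (- 2*k*t) = 1" by (simp add: exp_minus field_simps)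
    ultimately have "1 - y t \<le> (1 + y t) * exp (- 2*k*t)" by (metis mult.assoc mult_1_right)
    then have "1 - exp (- 2 * (k*t)) \<le> y t * (1 + exp (- 2 * (k*t)))"
      by (simp add: algebra_simps)
    then show ?thesis unfolding tanh_real_altdef
      by (simp add: divide_le_eq add_pos_pos)
  qed
  show ?thesis
  proof (intro conjI allI impI)
    fix t :: real assume "t \<ge> 0" then show "cos (s * \<theta> t) \<ge> tanh (k * t)"
      using part1 unfolding y_def by simp
  next
    fix c :: real assume c: "-1 \<le> c \<and> c < 1"
    define T where "T = ln (2 / (1 - c)) / (2 * k)"
    have pos: "2 / (1 - c) > 0" using c by simp
    have T0: "T \<ge> 0" unfolding T_def using c assms(2) by (auto simp: field_simps)
    have "- 2 * (k * T) = - ln (2 / (1 - c))" unfolding T_def using assms(2) by simp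
    then have "exp (- 2 * (k * T)) = inverse (exp (ln (2 / (1 - c))))" by (simp add: exp_minus)
    also have "\<dots> = (1 - c) / 2" using pos by simp
    finally have "exp (- 2 * (k * T)) = (1 - c) / 2" .
    then have "tanh (k * T) = (1 + c) / (3 - c)" unfolding tanh_real_altdef using c
      by (simp add: field_simps)
    also have "\<dots> \<ge> c"
    proof -
      have e: "c * (3 - c) = (1 + c) - (1 - c)\<^sup>2" by (simp add: power2_eq_square algebra_simps)
      have "c * (3 - c) \<le> 1 + c" unfolding e using zero_le_power2[of "1 - c"] by linarith
      then show ?thesis using c by (simp add: le_divide_eq)
    qed
    finally have "y T \<ge> c" using part1[OF T0] by linarith
    then have "T \<in> {t. t \<ge> 0 \<and> cos (s * \<theta> t) \<ge> c}" using T0 unfolding y_def by simp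
    moreover have "bdd_below {t. t \<ge> 0 \<and> cos (s * \<theta> t) \<ge> c}"
      by (rule bdd_belowI[of _ 0]) auto
    ultimately show "Inf {t. t \<ge> 0 \<and> cos (s * \<theta> t) \<ge> c} \<le> ln (2 / (1 - c)) / (2 * k)"
      unfolding T_def[symmetric] by (rule cInf_lower)
  qed
qed

end
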